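(* Let $X$ be a joinable uniform space. If $\mathrm{pro}\text{-}\pi_1(X,x_0)$ satisfies the strong Mittag-Leffler condition for some $x_0\in X$, then $X$ is uniformly joinable.
   Context: $R(X,E)$ is the Rips complex of $X$ (vertex set $X$, simplices the finite $F$ with $F\times F\subset E$, weak topology); $e(x,y)$ is the edge-path. $\mathrm{pro}\text{-}\pi_1(X,x_0)$ is the inverse system $\{\pi_1(R(X,E),x_0)\}_E$ indexed by entourages ordered by reverse inclusion, with inverse limit $\check\pi_1(X,x_0)$. A generalized path from $x$ to $y$ is a family $\{[c_E]\}_E$ of homotopy classes rel. end-points of paths from $x$ to $y$ in $R(X,E)$ with $c_F\simeq c_E$ rel. end-points in $R(X,E)$ for $F\subset E$; it is $F$-short if $(x,y)\in F$ and $c_F\simeq e(x,y)$ rel. end-points in $R(X,F)$. $X$ is joinable if any two points are joined by a generalized path; uniformly joinable if for each entourage $E$ there is an entourage $F$ such that any $(x,y)\in F$ are joined by an $E$-short generalized path. An inverse system of groups $\{G_a\}$ with limit $G$ satisfies the strong Mittag-Leffler condition if for every $a$ there is $b>a$ with $\mathrm{im}(G_b\to G_a)\subset\mathrm{im}(G\to G_a)$. *)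

theory Defs
  imports "HOL-Analysis.Analysis"
begin

definition entourages :: "('a \<times> 'a) filter \<Rightarrow> ('a \<times> 'a) set set" where
  "entourages U = {E. eventually (\<lambda>p. p \<in> E) U}"

text \<open>Rips complex R(X,E), vertex set the whole type. Points of the geometric
  realization are barycentric-coordinate functions 'a => real.\<close>
definition rips_simplices :: "('a \<times> 'a) set \<Rightarrow> 'a set set" where
  "rips_simplices E = {\<sigma>. finite \<sigma> \<and> \<sigma> \<noteq> {} \<and> \<sigma> \<times> \<sigma> \<subseteq> E}"

definition simplex_real :: "'a set \<Rightarrow> ('a \<Rightarrow> real) set" where
  "simplex_real \<sigma> = {t. (\<forall>z. 0 \<le> t z) \<and> (\<forall>z. z \<notin> \<sigma> \<longrightarrow> t z = 0) \<and> sum t \<sigma> = 1}"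

definition rips_carrier :: "('a \<times> 'a) set \<Rightarrow> ('a \<Rightarrow> real) set" where
  "rips_carrier E = \<Union> (simplex_real ` rips_simplices E)"

text \<open>Weak topology: U is open iff its trace on every closed simplex is open
  (each closed simplex carrying its Euclidean topology, i.e. the subspace
  topology from the product topology on 'a => real).\<close>
definition rips_top :: "('a \<times> 'a) set \<Rightarrow> ('a \<Rightarrow> real) topology" where
  "rips_top E = topology (\<lambda>U. U \<subseteq> rips_carrier E \<and>
     (\<forall>\<sigma>\<in>rips_simplices E. openin (top_of_set (simplex_real \<sigma>)) (U \<inter> simplex_real \<sigma>)))"

definition vtx :: "'a \<Rightarrow> 'a \<Rightarrow> real" where
  "vtx x = (\<lambda>z. if z = x then 1 else 0)"

definition edge_path :: "'a \<Rightarrow> 'a \<Rightarrow> real \<Rightarrow> 'a \<Rightarrow> real" where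
  "edge_path x y = (\<lambda>s z. (1 - s) * vtx x z + s * vtx y z)"

definition path_homotopic :: "'b topology \<Rightarrow> (real \<Rightarrow> 'b) \<Rightarrow> (real \<Rightarrow> 'b) \<Rightarrow> bool" where
  "path_homotopic T p q =
     homotopic_with (\<lambda>r. r 0 = p 0 \<and> r 1 = p 1) (top_of_set {0..1}) T p q"

text \<open>Generalized path from x to y: a compatible family of (representatives of)
  homotopy classes rel end-points of paths from x to y in each R(X,E).\<close>
definition gen_path :: "('a \<times> 'a) filter \<Rightarrow> 'a \<Rightarrow> 'a \<Rightarrow>
    (('a \<times> 'a) set \<Rightarrow> real \<Rightarrow> 'a \<Rightarrow> real) \<Rightarrow> bool" where
  "gen_path U x y c \<longleftrightarrow>
     (\<forall>E\<in>entourages U. pathin (rips_top E) (c E) \<and> c E 0 = vtx x \<and> c E 1 = vtx y) \<and>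
     (\<forall>E\<in>entourages U. \<forall>F\<in>entourages U. F \<subseteq> E \<longrightarrow>
        path_homotopic (rips_top E) (c F) (c E))"

definition short_gen_path :: "('a \<times> 'a) filter \<Rightarrow> ('a \<times> 'a) set \<Rightarrow> 'a \<Rightarrow> 'a \<Rightarrow>
    (('a \<times> 'a) set \<Rightarrow> real \<Rightarrow> 'a \<Rightarrow> real) \<Rightarrow> bool" where
  "short_gen_path U F x y c \<longleftrightarrow>
     gen_path U x y c \<and> (x, y) \<in> F \<and> path_homotopic (rips_top F) (c F) (edge_path x y)"

definition joinable :: "('a \<times> 'a) filter \<Rightarrow> bool" where
  "joinable U \<longleftrightarrow> (\<forall>x y. \<exists>c. gen_path U x y c)"

definition uniformly_joinable :: "('a \<times> 'a) filter \<Rightarrow> bool" where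
  "uniformly_joinable U \<longleftrightarrow>
     (\<forall>E\<in>entourages U. \<exists>F\<in>entourages U. \<forall>x y. (x, y) \<in> F \<longrightarrow>
        (\<exists>c. short_gen_path U E x y c))"

text \<open>Strong Mittag-Leffler condition for pro-pi_1(X,x0): for every entourage E
  there is an entourage F \<subseteq> E such that the image of pi_1(R(X,F),x0) in
  pi_1(R(X,E),x0) lies in the image of the inverse limit. Elements of the
  inverse limit are exactly the generalized loops at x0; the bonding maps are
  induced by the inclusions R(X,F) \<subseteq> R(X,E).\<close>
definition pro_pi1_strong_ML :: "('a \<times> 'a) filter \<Rightarrow> 'a \<Rightarrow> bool" where
  "pro_pi1_strong_ML U x0 \<longleftrightarrow>
     (\<forall>E\<in>entourages U. \<exists>F\<in>entourages U. F \<subseteq> E \<and>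
        (\<forall>c. pathin (rips_top F) c \<and> c 0 = vtx x0 \<and> c 1 = vtx x0 \<longrightarrow>
           (\<exists>d. gen_path U x0 x0 d \<and> path_homotopic (rips_top E) (d E) c)))"

end

theory Submission
  imports Defs
begin

lemma cont_lin01:
  assumes "\<And>t. t \<in> S \<Longrightarrow> a * t + b \<in> {0..1::real}"
  shows "continuous_map (top_of_set S) (top_of_set {0..1}) (\<lambda>t::real. a * t + b)"
  using assms by (auto intro!: continuous_intros)

lemma pathin_join:
  assumes p: "pathin T p" and q: "pathin T q" and e: "p 1 = q 0"
  shows "pathin T (p +++ q)"
proof -
  have "continuous_map (top_of_set {0..1}) T (\<lambda>x. if x \<le> 1/2 then p (2 * x) else q (2 * x - 1))"
  proof (rule continuous_map_cases_le)
    show "continuous_map (top_of_set {0..1}) euclideanreal (\<lambda>x::real. x)" by simp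
    show "continuous_map (top_of_set {0..1}) euclideanreal (\<lambda>x::real. 1/2)" by simp
    have s1: "subtopology (top_of_set {0..1}) {x. x \<in> topspace (top_of_set {0..1::real}) \<and> x \<le> 1/2} = top_of_set {0..1/2}"
      by (auto simp: subtopology_subtopology intro!: arg_cong[where f="top_of_set"])
    have s2: "subtopology (top_of_set {0..1}) {x. x \<in> topspace (top_of_set {0..1::real}) \<and> 1/2 \<le> x} = top_of_set {1/2..1}"
      by (auto simp: subtopology_subtopology intro!: arg_cong[where f="top_of_set"])
    have "continuous_map (top_of_set {0..1/2}) T (p \<circ> (\<lambda>x. 2 * x + 0))"
      using p unfolding pathin_def by (intro continuous_map_compose[OF cont_lin01]) auto
    then show "continuous_map (subtopology (top_of_set {0..1}) {x. x \<in> topspace (top_of_set {0..1}) \<and> x \<le> 1/2}) T (\<lambda>x. p (2 * x))"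
      unfolding s1 by (simp add: o_def)
    have "continuous_map (top_of_set {1/2..1}) T (q \<circ> (\<lambda>x. 2 * x + (-1)))"
      using q unfolding pathin_def by (intro continuous_map_compose[OF cont_lin01]) auto
    then show "continuous_map (subtopology (top_of_set {0..1}) {x. x \<in> topspace (top_of_set {0..1}) \<and> 1/2 \<le> x}) T (\<lambda>x. q (2 * x - 1))"
      unfolding s2 by (simp add: o_def)
    show "p (2*x) = q (2*x-1)" if "x \<in> topspace (top_of_set {0..1})" "x = 1/2" for x
    proof -
      have h: "2*x = 1" using that by simp
      show ?thesis unfolding h using e by simp
    qed
  qed
  then show ?thesis unfolding pathin_def joinpaths_def .
qed

lemma pathin_reverse:
  assumes p: "pathin T p" shows "pathin T (reversepath p)"
proof -
  have "continuous_map (top_of_set {0..1}) T (p \<circ> (\<lambda>x. (-1) * x + 1))"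
    using p unfolding pathin_def by (intro continuous_map_compose[OF cont_lin01]) auto
  then show ?thesis by (simp add: pathin_def reversepath_def o_def)
qed

lemma PH_imp:
  assumes "path_homotopic T p q"
  shows "pathin T p \<and> pathin T q \<and> q 0 = p 0 \<and> q 1 = p 1"
  using homotopic_with_imp_continuous_maps[OF assms[unfolded path_homotopic_def]]
    homotopic_with_imp_property[OF assms[unfolded path_homotopic_def]]
  by (simp add: pathin_def)

lemma PH_refl: "pathin T p \<Longrightarrow> path_homotopic T p p"
  by (simp add: path_homotopic_def pathin_def)

lemma PH_sym:
  assumes h: "path_homotopic T p q" shows "path_homotopic T q p"
proof -
  have e: "q 0 = p 0" "q 1 = p 1" using PH_imp[OF h] by auto
  show ?thesis using h unfolding path_homotopic_def e
    by (simp add: homotopic_with_sym)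
qed

lemma PH_trans:
  assumes h: "path_homotopic T p q" and g: "path_homotopic T q r" shows "path_homotopic T p r"
proof -
  have e: "q 0 = p 0" "q 1 = p 1" using PH_imp[OF h] by auto
  show ?thesis using h g unfolding path_homotopic_def e
    by (rule homotopic_with_trans)
qed

lemma PH_eq:
  assumes h: "path_homotopic T p q"
    and "\<And>t. t \<in> {0..1} \<Longrightarrow> p' t = p t" and "\<And>t. t \<in> {0..1} \<Longrightarrow> q' t = q t"
  shows "path_homotopic T p' q'"
proof -
  have e: "p' 0 = p 0" "p' 1 = p 1" using assms by auto
  show ?thesis using h unfolding path_homotopic_def e
    by (rule homotopic_with_eq) (use assms in auto)
qed

lemma PH_reparam:
  assumes p: "pathin T p" and f: "continuous_on {0..1} f" "f ` {0..1} \<subseteq> {0..1}" "f 0 = 0" "f 1 = 1"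
  shows "path_homotopic T (p \<circ> f) p"
proof -
  have "homotopic_paths {0..1} id f"
    by (rule homotopic_paths_reparametrize[where f=f]) (use f in \<open>auto simp: path_def path_image_def\<close>)
  then have "homotopic_with (\<lambda>j. j 0 = p 0 \<and> j 1 = p 1) (top_of_set {0..1}) T (p \<circ> id) (p \<circ> f)"
    unfolding homotopic_paths_def
    by (rule homotopic_with_compose_continuous_map_left) (use p in \<open>auto simp: pathin_def pathstart_def pathfinish_def\<close>)
  then have "path_homotopic T p (p \<circ> f)" by (simp add: path_homotopic_def)
  then show ?thesis by (rule PH_sym)
qed

lemma PH_rinv:
  assumes p: "pathin T p"
  shows "path_homotopic T (p +++ reversepath p) (\<lambda>_. p 0)"
proof -
  have "homotopic_paths {0..1} (id +++ reversepath id) (linepath (pathstart id) (pathstart id))"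
    by (rule homotopic_paths_rinv) (auto simp: path_def path_image_def)
  then have "homotopic_with (\<lambda>j. j 0 = p 0 \<and> j 1 = p 0) (top_of_set {0..1}) T (p \<circ> (id +++ reversepath id)) (p \<circ> linepath (pathstart id) (pathstart id))"
    unfolding homotopic_paths_def
    by (rule homotopic_with_compose_continuous_map_left) (use p in \<open>auto simp: pathin_def pathstart_def pathfinish_def joinpaths_def reversepath_def\<close>)
  then have "path_homotopic T (p \<circ> (id +++ reversepath id)) (p \<circ> linepath (pathstart id) (pathstart id))"
    by (simp add: path_homotopic_def joinpaths_def reversepath_def)
  then show ?thesis
    by (rule PH_eq) (auto simp: joinpaths_def reversepath_def linepath_def pathstart_def)
qed

lemma PH_rev:
  assumes h: "path_homotopic T p q"
  shows "path_homotopic T (reversepath p) (reversepath q)"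
proof -
  have c: "continuous_map (top_of_set {0..1}) (top_of_set {0..1}) (\<lambda>x::real. (-1) * x + 1)"
    by (rule cont_lin01) auto
  have "homotopic_with (\<lambda>j. j 0 = p 1 \<and> j 1 = p 0) (top_of_set {0..1}) T (p \<circ> (\<lambda>x::real. (-1) * x + 1)) (q \<circ> (\<lambda>x::real. (-1) * x + 1))"
    by (rule homotopic_with_compose_continuous_map_right[OF h[unfolded path_homotopic_def] c]) auto
  then show ?thesis
    by (simp add: path_homotopic_def reversepath_def o_def)
qed

lemma PH_join:
  assumes h1: "path_homotopic T p p'" and h2: "path_homotopic T q q'" and e: "p 1 = q 0"
  shows "path_homotopic T (p +++ q) (p' +++ q')"
proof -
  have "\<exists>k1. continuous_map (top_of_set ({0..1} \<times> {0..1})) T (k1 :: real \<times> real \<Rightarrow> _) \<and>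
    (\<forall>x. k1 (0, x) = p x) \<and> (\<forall>x. k1 (1, x) = p' x) \<and>
    (\<forall>s\<in>{0..1}. k1 (s, 0) = p 0 \<and> k1 (s, 1) = p 1)"
    using h1 unfolding path_homotopic_def homotopic_with_def by simp
  then obtain k1 where k1: "continuous_map (top_of_set ({0..1} \<times> {0..1})) T (k1 :: real \<times> real \<Rightarrow> _)"
    "\<And>x. k1 (0, x) = p x" "\<And>x. k1 (1, x) = p' x"
    "\<And>s. s \<in> {0..1} \<Longrightarrow> k1 (s, 0) = p 0 \<and> k1 (s, 1) = p 1"
    by blast
  have "\<exists>k2. continuous_map (top_of_set ({0..1} \<times> {0..1})) T (k2 :: real \<times> real \<Rightarrow> _) \<and>
    (\<forall>x. k2 (0, x) = q x) \<and> (\<forall>x. k2 (1, x) = q' x) \<and>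
    (\<forall>s\<in>{0..1}. k2 (s, 0) = q 0 \<and> k2 (s, 1) = q 1)"
    using h2 unfolding path_homotopic_def homotopic_with_def by simp
  then obtain k2 where k2: "continuous_map (top_of_set ({0..1} \<times> {0..1})) T (k2 :: real \<times> real \<Rightarrow> _)"
    "\<And>x. k2 (0, x) = q x" "\<And>x. k2 (1, x) = q' x"
    "\<And>s. s \<in> {0..1} \<Longrightarrow> k2 (s, 0) = q 0 \<and> k2 (s, 1) = q 1"
    by blast
  define k where "k = (\<lambda>z::real\<times>real. if snd z \<le> 1/2 then k1 (fst z, 2 * snd z) else k2 (fst z, 2 * snd z - 1))"
  have ck: "continuous_map (top_of_set ({0..1} \<times> {0..1})) T k"
    unfolding k_def
  proof (rule continuous_map_cases_le)
    show "continuous_map (top_of_set ({0..1} \<times> {0..1})) euclideanreal (\<lambda>x::real\<times>real. snd x)"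
      by (auto intro!: continuous_intros)
    show "continuous_map (top_of_set ({0..1} \<times> {0..1})) euclideanreal (\<lambda>x::real\<times>real. 1/2)" by simp
    have s1: "subtopology (top_of_set ({0..1} \<times> {0..1})) {x. x \<in> topspace (top_of_set ({0..1::real} \<times> {0..1::real})) \<and> snd x \<le> 1/2} = top_of_set ({0..1} \<times> {0..1/2})"
      by (auto simp: subtopology_subtopology intro!: arg_cong[where f="top_of_set"])
    have s2: "subtopology (top_of_set ({0..1} \<times> {0..1})) {x. x \<in> topspace (top_of_set ({0..1::real} \<times> {0..1::real})) \<and> 1/2 \<le> snd x} = top_of_set ({0..1} \<times> {1/2..1})"
      by (auto simp: subtopology_subtopology intro!: arg_cong[where f="top_of_set"])
    have c1: "continuous_map (top_of_set ({0..1} \<times> {0..1/2})) (top_of_set ({0..1} \<times> {0..1})) (\<lambda>z::real\<times>real. (fst z, 2 * snd z))"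
      by (auto intro!: continuous_intros)
    have c2: "continuous_map (top_of_set ({0..1} \<times> {1/2..1})) (top_of_set ({0..1} \<times> {0..1})) (\<lambda>z::real\<times>real. (fst z, 2 * snd z - 1))"
      by (auto intro!: continuous_intros)
    show "continuous_map (subtopology (top_of_set ({0..1} \<times> {0..1})) {x. x \<in> topspace (top_of_set ({0..1} \<times> {0..1})) \<and> snd x \<le> 1/2}) T (\<lambda>x. k1 (fst x, 2 * snd x))"
      unfolding s1 using continuous_map_compose[OF c1 k1(1)] by (simp add: o_def)
    show "continuous_map (subtopology (top_of_set ({0..1} \<times> {0..1})) {x. x \<in> topspace (top_of_set ({0..1} \<times> {0..1})) \<and> 1/2 \<le> snd x}) T (\<lambda>x. k2 (fst x, 2 * snd x - 1))"
      unfolding s2 using continuous_map_compose[OF c2 k2(1)] by (simp add: o_def)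
    show "k1 (fst x, 2 * snd x) = k2 (fst x, 2 * snd x - 1)" if "x \<in> topspace (top_of_set ({0..1} \<times> {0..1}))" "snd x = 1/2" for x
    proof -
      have h: "2 * snd x = 1" using that by simp
      have f: "fst x \<in> {0..1}" using that by auto
      show ?thesis unfolding h using k1(4)[OF f] k2(4)[OF f] e by simp
    qed
  qed
  show ?thesis
    unfolding path_homotopic_def homotopic_with_def
  proof (rule exI[of _ k], intro conjI)
    show "continuous_map (prod_topology (top_of_set {0..1}) (top_of_set {0..1})) T k"
      using ck by simp
    show "\<forall>x. k (0, x) = (p +++ q) x" "\<forall>x. k (1, x) = (p' +++ q') x"
      by (auto simp: k_def joinpaths_def k1 k2)
    show "\<forall>t\<in>{0..1}. (\<lambda>x. k (t, x)) 0 = (p +++ q) 0 \<and> (\<lambda>x. k (t, x)) 1 = (p +++ q) 1"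
      using k1(4) k2(4) by (auto simp: k_def joinpaths_def)
  qed
qed

lemma PH_assoc:
  assumes p: "pathin T p" and q: "pathin T q" and r: "pathin T r" and e: "p 1 = q 0" "q 1 = r 0"
  shows "path_homotopic T (p +++ (q +++ r)) ((p +++ q) +++ r)"
proof -
  define f where "f = (\<lambda>t::real. if t \<le> 1/2 then inverse 2 * t else if t \<le> 3/4 then t - 1/4 else 2 * t - 1)"
  have cf: "continuous_on {0..1} f"
    unfolding f_def
    by (rule continuous_on_cases_1 continuous_intros | auto)+
  have pj: "pathin T ((p +++ q) +++ r)"
    by (rule pathin_join pathin_join p q r | (simp add: joinpaths_def e))+
  have "path_homotopic T (((p +++ q) +++ r) \<circ> f) ((p +++ q) +++ r)"
    by (rule PH_reparam[OF pj]) (use cf in \<open>auto simp: f_def\<close>)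
  then show ?thesis
    by (rule PH_eq) (auto simp: f_def joinpaths_def)
qed

lemma PH_rid:
  assumes p: "pathin T p"
  shows "path_homotopic T (p +++ (\<lambda>_. p 1)) p"
proof -
  define f where "f = (\<lambda>t::real. if t \<le> 1/2 then 2 * t else 1)"
  have cf: "continuous_on {0..1} f"
    unfolding f_def
    by (rule continuous_on_cases_1 continuous_intros | auto)+
  have "path_homotopic T (p \<circ> f) p"
    by (rule PH_reparam) (use cf p in \<open>auto simp: f_def\<close>)
  then show ?thesis
    by (rule PH_eq) (auto simp: f_def joinpaths_def)
qed

lemma PH_lid:
  assumes p: "pathin T p"
  shows "path_homotopic T ((\<lambda>_. p 0) +++ p) p"
proof -
  define f where "f = (\<lambda>t::real. if t \<le> 1/2 then 0 else 2 * t - 1)"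
  have cf: "continuous_on {0..1} f"
    unfolding f_def
    by (rule continuous_on_cases_1 continuous_intros | auto)+
  have "path_homotopic T (p \<circ> f) p"
    by (rule PH_reparam) (use cf p in \<open>auto simp: f_def\<close>)
  then show ?thesis
    by (rule PH_eq) (auto simp: f_def joinpaths_def)
qed

lemma join0 [simp]: "(p +++ q) 0 = p 0" by (simp add: joinpaths_def)
lemma join1 [simp]: "(p +++ q) 1 = q 1" by (simp add: joinpaths_def)
lemma rev0 [simp]: "reversepath p 0 = p 1" by (simp add: reversepath_def)
lemma rev1 [simp]: "reversepath p 1 = p 0" by (simp add: reversepath_def)

lemma rips_istop:
  "istopology (\<lambda>U. U \<subseteq> rips_carrier E \<and>
     (\<forall>\<sigma>\<in>rips_simplices E. openin (top_of_set (simplex_real \<sigma>)) (U \<inter> simplex_real \<sigma>)))"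
  unfolding istopology_def
proof (rule conjI; intro allI impI)
  fix S T :: "('a \<Rightarrow> real) set"
  assume S: "S \<subseteq> rips_carrier E \<and> (\<forall>\<sigma>\<in>rips_simplices E. openin (top_of_set (simplex_real \<sigma>)) (S \<inter> simplex_real \<sigma>))"
    and T: "T \<subseteq> rips_carrier E \<and> (\<forall>\<sigma>\<in>rips_simplices E. openin (top_of_set (simplex_real \<sigma>)) (T \<inter> simplex_real \<sigma>))"
  show "S \<inter> T \<subseteq> rips_carrier E \<and> (\<forall>\<sigma>\<in>rips_simplices E. openin (top_of_set (simplex_real \<sigma>)) (S \<inter> T \<inter> simplex_real \<sigma>))"
  proof (intro conjI ballI)
    show "S \<inter> T \<subseteq> rips_carrier E" using S by blast
    fix \<sigma> assume "\<sigma> \<in> rips_simplices E"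
    then have "openin (top_of_set (simplex_real \<sigma>)) ((S \<inter> simplex_real \<sigma>) \<inter> (T \<inter> simplex_real \<sigma>))"
      using S T by (metis openin_Int)
    moreover have "(S \<inter> simplex_real \<sigma>) \<inter> (T \<inter> simplex_real \<sigma>) = S \<inter> T \<inter> simplex_real \<sigma>" by blast
    ultimately show "openin (top_of_set (simplex_real \<sigma>)) (S \<inter> T \<inter> simplex_real \<sigma>)" by simp
  qed
next
  fix K :: "('a \<Rightarrow> real) set set"
  assume K: "\<forall>S\<in>K. S \<subseteq> rips_carrier E \<and> (\<forall>\<sigma>\<in>rips_simplices E. openin (top_of_set (simplex_real \<sigma>)) (S \<inter> simplex_real \<sigma>))"
  show "\<Union>K \<subseteq> rips_carrier E \<and> (\<forall>\<sigma>\<in>rips_simplices E. openin (top_of_set (simplex_real \<sigma>)) (\<Union>K \<inter> simplex_real \<sigma>))"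
  proof (intro conjI ballI)
    show "\<Union>K \<subseteq> rips_carrier E" using K by blast
    fix \<sigma> assume "\<sigma> \<in> rips_simplices E"
    then have "openin (top_of_set (simplex_real \<sigma>)) (\<Union>((\<lambda>S. S \<inter> simplex_real \<sigma>) ` K))"
      using K by (intro openin_Union) auto
    moreover have "\<Union>((\<lambda>S. S \<inter> simplex_real \<sigma>) ` K) = \<Union>K \<inter> simplex_real \<sigma>" by blast
    ultimately show "openin (top_of_set (simplex_real \<sigma>)) (\<Union>K \<inter> simplex_real \<sigma>)" by simp
  qed
qed

lemma openin_rips:
  "openin (rips_top E) U \<longleftrightarrow> U \<subseteq> rips_carrier E \<and>
     (\<forall>\<sigma>\<in>rips_simplices E. openin (top_of_set (simplex_real \<sigma>)) (U \<inter> simplex_real \<sigma>))"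
  unfolding rips_top_def topology_inverse'[OF rips_istop] by (rule refl)

lemma simplex_sub_carrier: "\<sigma> \<in> rips_simplices E \<Longrightarrow> simplex_real \<sigma> \<subseteq> rips_carrier E"
  unfolding rips_carrier_def by blast

lemma topspace_rips: "topspace (rips_top E) = rips_carrier E"
proof
  show "topspace (rips_top E) \<subseteq> rips_carrier E"
    unfolding topspace_def using openin_rips by blast
  have "openin (rips_top E) (rips_carrier E)"
    unfolding openin_rips
  proof (intro conjI ballI)
    fix \<sigma> assume s: "\<sigma> \<in> rips_simplices E"
    then have "rips_carrier E \<inter> simplex_real \<sigma> = simplex_real \<sigma>" using simplex_sub_carrier by blast
    then show "openin (top_of_set (simplex_real \<sigma>)) (rips_carrier E \<inter> simplex_real \<sigma>)" by simp
  qed simp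
  then show "rips_carrier E \<subseteq> topspace (rips_top E)"
    by (rule openin_subset)
qed

lemma rips_mono:
  assumes FE: "F \<subseteq> E"
  shows "continuous_map (rips_top F) (rips_top E) id"
proof -
  have sm: "rips_simplices F \<subseteq> rips_simplices E" using FE unfolding rips_simplices_def by auto
  then have cm: "rips_carrier F \<subseteq> rips_carrier E" unfolding rips_carrier_def by blast
  show ?thesis
    unfolding continuous_map topspace_rips
  proof (intro conjI allI impI)
    show "id ` rips_carrier F \<subseteq> rips_carrier E" using cm by simp
    fix U assume U: "openin (rips_top E) U"
    show "openin (rips_top F) {x \<in> rips_carrier F. id x \<in> U}"
      unfolding openin_rips
    proof (intro conjI ballI)
      fix \<sigma> assume s: "\<sigma> \<in> rips_simplices F"
      then have "{x \<in> rips_carrier F. id x \<in> U} \<inter> simplex_real \<sigma> = U \<inter> simplex_real \<sigma>"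
        using simplex_sub_carrier[OF s] by auto
      then show "openin (top_of_set (simplex_real \<sigma>)) ({x \<in> rips_carrier F. id x \<in> U} \<inter> simplex_real \<sigma>)"
        using U s sm unfolding openin_rips by auto
    qed auto
  qed
qed

lemma simplex_incl:
  assumes s: "\<sigma> \<in> rips_simplices E"
  shows "continuous_map (top_of_set (simplex_real \<sigma>)) (rips_top E) id"
  unfolding continuous_map topspace_rips
proof (intro conjI allI impI)
  show "id ` topspace (top_of_set (simplex_real \<sigma>)) \<subseteq> rips_carrier E"
    using simplex_sub_carrier[OF s] by simp
  fix U assume U: "openin (rips_top E) U"
  have "{x \<in> topspace (top_of_set (simplex_real \<sigma>)). id x \<in> U} = U \<inter> simplex_real \<sigma>" by auto
  then show "openin (top_of_set (simplex_real \<sigma>)) {x \<in> topspace (top_of_set (simplex_real \<sigma>)). id x \<in> U}"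
    using U s unfolding openin_rips by auto
qed

lemma edge_pathin:
  assumes "(x, y) \<in> F" "(y, x) \<in> F" "(x, x) \<in> F" "(y, y) \<in> F"
  shows "pathin (rips_top F) (edge_path x y)"
proof -
  have s: "{x, y} \<in> rips_simplices F" using assms unfolding rips_simplices_def by auto
  have c: "continuous_on {0..1} (edge_path x y)"
    unfolding edge_path_def by (intro continuous_on_coordinatewise_then_product continuous_intros)
  have m: "edge_path x y t \<in> simplex_real {x, y}" if t: "t \<in> {0..1}" for t
  proof -
    have "sum (edge_path x y t) {x, y} = 1"
      by (cases "x = y") (auto simp: edge_path_def vtx_def)
    then show ?thesis using t unfolding simplex_real_def by (auto simp: edge_path_def vtx_def)
  qed
  have "continuous_map (top_of_set {0..1}) (top_of_set (simplex_real {x, y})) (edge_path x y)"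
    using c m by auto
  then have "pathin (rips_top F) (id \<circ> edge_path x y)"
    unfolding pathin_def by (rule continuous_map_compose[OF _ simplex_incl[OF s]])
  then show ?thesis by simp
qed

lemma edge0 [simp]: "edge_path x y 0 = vtx x" and edge1 [simp]: "edge_path x y 1 = vtx y"
  by (auto simp: edge_path_def)

theorem mainTheorem9:
  fixes x0 :: "'a::uniform_space"
  assumes "joinable (uniformity :: ('a \<times> 'a) filter)"
    and "pro_pi1_strong_ML (uniformity :: ('a \<times> 'a) filter) x0"
  shows "uniformly_joinable (uniformity :: ('a \<times> 'a) filter)"
  unfolding uniformly_joinable_def
proof (intro ballI)
  fix E assume E: "E \<in> entourages (uniformity :: ('a \<times> 'a) filter)"
  have "\<exists>F\<in>entourages (uniformity :: ('a \<times> 'a) filter). F \<subseteq> E \<and>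
        (\<forall>c. pathin (rips_top F) c \<and> c 0 = vtx x0 \<and> c 1 = vtx x0 \<longrightarrow>
           (\<exists>d. gen_path uniformity x0 x0 d \<and> path_homotopic (rips_top E) (d E) c))"
    using assms(2) E unfolding pro_pi1_strong_ML_def by (rule bspec)
  then obtain F where F: "F \<in> entourages (uniformity :: ('a \<times> 'a) filter)" "F \<subseteq> E"
    and mlc: "\<forall>c. pathin (rips_top F) c \<and> c 0 = vtx x0 \<and> c 1 = vtx x0 \<longrightarrow>
           (\<exists>d. gen_path uniformity x0 x0 d \<and> path_homotopic (rips_top E) (d E) c)"
    by (elim bexE conjE) (rule that)
  define F0 where "F0 = F \<inter> {(x, y). (y, x) \<in> F}"
  have Fev: "eventually (\<lambda>p. p \<in> F) (uniformity :: ('a \<times> 'a) filter)"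
    using F unfolding entourages_def by simp
  have "eventually (\<lambda>p. p \<in> F0) (uniformity :: ('a \<times> 'a) filter)"
    using eventually_conj[OF Fev uniformity_sym[OF Fev]] unfolding F0_def
    by (simp add: case_prod_unfold)
  then have F0: "F0 \<in> entourages (uniformity :: ('a \<times> 'a) filter)"
    unfolding entourages_def by simp
  show "\<exists>F\<in>entourages uniformity. \<forall>x y. (x, y) \<in> F \<longrightarrow> (\<exists>c. short_gen_path uniformity E x y c)"
  proof (intro bexI[OF _ F0] allI impI)
    fix x y :: 'a assume xy: "(x, y) \<in> F0"
    have xyF: "(x, y) \<in> F" "(y, x) \<in> F" using xy unfolding F0_def by auto
    have xxF: "(x, x) \<in> F" "(y, y) \<in> F" using uniformity_refl[OF Fev] by auto
    obtain a where a: "gen_path uniformity x0 x a" using assms(1) unfolding joinable_def by blast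
    obtain b where b: "gen_path uniformity x0 y b" using assms(1) unfolding joinable_def by blast
    define e where "e = edge_path x y"
    have eF: "pathin (rips_top F) e" unfolding e_def by (rule edge_pathin[OF xyF xxF])
    have e01: "e 0 = vtx x" "e 1 = vtx y" by (auto simp: e_def)
    have aG: "\<And>G. G \<in> entourages uniformity \<Longrightarrow> pathin (rips_top G) (a G) \<and> a G 0 = vtx x0 \<and> a G 1 = vtx x"
      using a unfolding gen_path_def by blast
    have bG: "\<And>G. G \<in> entourages uniformity \<Longrightarrow> pathin (rips_top G) (b G) \<and> b G 0 = vtx x0 \<and> b G 1 = vtx y"
      using b unfolding gen_path_def by blast
    define L where "L = a F +++ (e +++ reversepath (b F))"
    have L: "pathin (rips_top F) L" "L 0 = vtx x0" "L 1 = vtx x0"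
      unfolding L_def using aG[OF F(1)] bG[OF F(1)] eF e01
      by (auto intro!: pathin_join pathin_reverse)
    obtain d where d: "gen_path uniformity x0 x0 d" and dL: "path_homotopic (rips_top E) (d E) L"
      using mlc L by blast
    have dG: "\<And>G. G \<in> entourages uniformity \<Longrightarrow> pathin (rips_top G) (d G) \<and> d G 0 = vtx x0 \<and> d G 1 = vtx x0"
      using d unfolding gen_path_def by blast
    define c where "c = (\<lambda>G. reversepath (a G) +++ (d G +++ b G))"
    have gc: "gen_path uniformity x y c"
      unfolding gen_path_def
    proof (intro conjI ballI impI)
      fix G assume G: "G \<in> entourages (uniformity :: ('a \<times> 'a) filter)"
      show "pathin (rips_top G) (c G)" unfolding c_def
        using aG[OF G] bG[OF G] dG[OF G] by (auto intro!: pathin_join pathin_reverse)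
      show "c G 0 = vtx x" "c G 1 = vtx y" unfolding c_def using aG[OF G] bG[OF G] by auto
    next
      fix G G' assume G: "G \<in> entourages (uniformity :: ('a \<times> 'a) filter)"
        and G': "G' \<in> entourages (uniformity :: ('a \<times> 'a) filter)" and GG: "G' \<subseteq> G"
      have ha: "path_homotopic (rips_top G) (a G') (a G)" using a G G' GG unfolding gen_path_def by blast
      have hb: "path_homotopic (rips_top G) (b G') (b G)" using b G G' GG unfolding gen_path_def by blast
      have hd: "path_homotopic (rips_top G) (d G') (d G)" using d G G' GG unfolding gen_path_def by blast
      show "path_homotopic (rips_top G) (c G') (c G)" unfolding c_def
        by (intro PH_join PH_rev ha hb hd) (use aG[OF G'] bG[OF G'] dG[OF G'] in auto)
    qed
    let ?T = "rips_top E"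
    have inc: "continuous_map (rips_top F) ?T id" by (rule rips_mono[OF F(2)])
    have eE: "pathin ?T e" using pathin_compose[OF eF inc] by simp
    have aE: "pathin ?T (a E)" "a E 0 = vtx x0" "a E 1 = vtx x" using aG[OF E] by auto
    have bE: "pathin ?T (b E)" "b E 0 = vtx x0" "b E 1 = vtx y" using bG[OF E] by auto
    have dE: "pathin ?T (d E)" "d E 0 = vtx x0" "d E 1 = vtx x0" using dG[OF E] by auto
    have aFE: "path_homotopic ?T (a F) (a E)" using a E F unfolding gen_path_def by blast
    have bFE: "path_homotopic ?T (b F) (b E)" using b E F unfolding gen_path_def by blast
    have aF: "a F 1 = vtx x" "a F 0 = vtx x0" using aG[OF F(1)] by auto
    have bF: "b F 1 = vtx y" "b F 0 = vtx x0" using bG[OF F(1)] by auto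
    have s1: "path_homotopic ?T (c E) (reversepath (a E) +++ (L +++ b E))"
      unfolding c_def
      by (intro PH_join PH_refl dL pathin_reverse aE bE) (use aE bE dE L in auto)
    have s2: "path_homotopic ?T L (a E +++ (e +++ reversepath (b E)))"
      unfolding L_def
      by (intro PH_join PH_refl PH_rev aFE bFE eE) (use aF bF e01 in auto)
    have s3: "path_homotopic ?T (reversepath (a E) +++ (L +++ b E))
                (reversepath (a E) +++ ((a E +++ (e +++ reversepath (b E))) +++ b E))"
      by (intro PH_join PH_refl s2 pathin_reverse aE bE) (use aE bE L in auto)
    have s4: "path_homotopic ?T ((a E +++ (e +++ reversepath (b E))) +++ b E)
                (a E +++ ((e +++ reversepath (b E)) +++ b E))"
      by (intro PH_sym[OF PH_assoc] aE bE eE pathin_join pathin_reverse) (use aE bE e01 in auto)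
    have s5: "path_homotopic ?T ((e +++ reversepath (b E)) +++ b E) (e +++ (reversepath (b E) +++ b E))"
      by (intro PH_sym[OF PH_assoc] aE bE eE pathin_join pathin_reverse) (use aE bE e01 in auto)
    have s6: "path_homotopic ?T (reversepath (b E) +++ b E) (\<lambda>_. vtx y)"
      using PH_rinv[OF pathin_reverse[OF bE(1)]] bE by simp
    have s7: "path_homotopic ?T (e +++ (\<lambda>_. vtx y)) e"
      using PH_rid[OF eE] e01 by simp
    have s8: "path_homotopic ?T (e +++ (reversepath (b E) +++ b E)) e"
      by (rule PH_trans[OF _ s7]) (intro PH_join PH_refl s6 eE; use e01 bE in auto)
    have s9: "path_homotopic ?T (a E +++ ((e +++ reversepath (b E)) +++ b E)) (a E +++ e)"
      by (intro PH_join PH_refl PH_trans[OF s5 s8] aE) (use aE e01 bE in auto)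
    have s10: "path_homotopic ?T (reversepath (a E) +++ (a E +++ e)) ((reversepath (a E) +++ a E) +++ e)"
      by (intro PH_assoc aE eE pathin_reverse) (use aE e01 in auto)
    have s11: "path_homotopic ?T (reversepath (a E) +++ a E) (\<lambda>_. vtx x)"
      using PH_rinv[OF pathin_reverse[OF aE(1)]] aE by simp
    have s12: "path_homotopic ?T ((\<lambda>_. vtx x) +++ e) e"
      using PH_lid[OF eE] e01 by simp
    have s13: "path_homotopic ?T ((reversepath (a E) +++ a E) +++ e) e"
      by (rule PH_trans[OF _ s12]) (intro PH_join PH_refl s11 eE; use e01 aE in auto)
    have s14: "path_homotopic ?T (reversepath (a E) +++ ((a E +++ (e +++ reversepath (b E))) +++ b E))
                  (reversepath (a E) +++ (a E +++ e))"
      by (intro PH_join PH_refl PH_trans[OF s4 s9] pathin_reverse aE) (use aE bE e01 in auto)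
    have fin: "path_homotopic ?T (c E) e"
      using PH_trans[OF s1 PH_trans[OF s3 PH_trans[OF s14 PH_trans[OF s10 s13]]]] .
    have "(x, y) \<in> E" using xyF F(2) by blast
    then show "\<exists>c. short_gen_path uniformity E x y c"
      using gc fin unfolding short_gen_path_def e_def by blast
  qed
qed

end
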